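(* Let $S^1\subset\mathbb R^2$ be the unit circle, parametrized by $x(\theta)=(\cos\theta,\sin\theta)$. Define, for $m=x(\theta)\ne m'=x(\theta')$, \[ K_{1/2}(m,m')=1-\frac{1}{2\pi}\ln\big(2(1-\cos(\theta'-\theta))\big). \] Then there is no function $K:S^1\times S^1\to\mathbb R$ of positive type (i.e. symmetric positive semidefinite kernel: $\sum_{i,j}\alpha_i\alpha_jK(m_i,m_j)\ge0$ for all finite families) with $K(m,m')=K_{1/2}(m,m')$ for all $m\ne m'$.
   Context: Note $K_{1/2}$ is well defined and jointly continuous on $S^1\times S^1$ minus the diagonal $\{(m,m)\}$, and $K_{1/2}(m,m')\to+\infty$ as $m'\to m$. *)

theory Defs
  imports "HOL-Analysis.Analysis"
begin

definition circ :: "real \<Rightarrow> real \<times> real" where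
  "circ \<theta> = (cos \<theta>, sin \<theta>)"

definition K_half :: "real \<Rightarrow> real \<Rightarrow> real" where
  "K_half \<theta> \<theta>' = 1 - (1 / (2 * pi)) * ln (2 * (1 - cos (\<theta>' - \<theta>)))"

definition positive_type_on :: "'a set \<Rightarrow> ('a \<Rightarrow> 'a \<Rightarrow> real) \<Rightarrow> bool" where
  "positive_type_on S K \<longleftrightarrow>
     (\<forall>x\<in>S. \<forall>y\<in>S. K x y = K y x) \<and>
     (\<forall>(n::nat) (m::nat \<Rightarrow> 'a) (\<alpha>::nat \<Rightarrow> real). (\<forall>i<n. m i \<in> S) \<longrightarrow>
        0 \<le> (\<Sum>i<n. \<Sum>j<n. \<alpha> i * \<alpha> j * K (m i) (m j)))"

end

theory Submission
  imports Defs
begin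

lemma circ_onto:
  assumes "m \<in> sphere (0::real\<times>real) 1"
  shows "\<exists>t. m = circ t"
proof -
  obtain a b where m: "m = (a,b)" by fastforce
  have "a\<^sup>2 + b\<^sup>2 = 1" using assms m by (simp add: norm_Pair)
  then obtain t where "a = cos t" "b = sin t" by (rule sincos_total_2pi)
  thus ?thesis using m by (auto simp: circ_def)
qed

lemma dist_circ: "(dist (circ t) (circ s))\<^sup>2 = 2 * (1 - cos (s - t))"
proof -
  have "(dist (circ t) (circ s))\<^sup>2 = (cos t - cos s)\<^sup>2 + (sin t - sin s)\<^sup>2"
    by (simp add: circ_def dist_Pair_Pair dist_real_def)
  also have "\<dots> = (sin t ^ 2 + cos t ^ 2) + (sin s ^ 2 + cos s ^ 2) - 2 * (cos s * cos t + sin s * sin t)"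
    by (simp add: power2_eq_square algebra_simps)
  also have "\<dots> = 2 * (1 - cos (s - t))" by (simp add: cos_diff)
  finally show ?thesis .
qed

lemma sphere_unc: "uncountable (sphere (0::real\<times>real) 1)"
proof (rule connected_uncountable)
  show "connected (sphere (0::real\<times>real) 1)" by (rule connected_sphere) simp
  show "(1::real,0::real) \<in> sphere 0 1" by simp
  show "(-1::real,0::real) \<in> sphere 0 1" by simp
qed simp

theorem mainTheorem6:
  shows "\<not> (\<exists>K :: real \<times> real \<Rightarrow> real \<times> real \<Rightarrow> real.
            positive_type_on (sphere (0::real \<times> real) 1) K \<and>
            (\<forall>\<theta> \<theta>'. circ \<theta> \<noteq> circ \<theta>' \<longrightarrow> K (circ \<theta>) (circ \<theta>') = K_half \<theta> \<theta>'))"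
proof
  assume "\<exists>K :: real \<times> real \<Rightarrow> real \<times> real \<Rightarrow> real.
            positive_type_on (sphere (0::real \<times> real) 1) K \<and>
            (\<forall>\<theta> \<theta>'. circ \<theta> \<noteq> circ \<theta>' \<longrightarrow> K (circ \<theta>) (circ \<theta>') = K_half \<theta> \<theta>')"
  then obtain K :: "real \<times> real \<Rightarrow> real \<times> real \<Rightarrow> real" where
    pt: "positive_type_on (sphere 0 1) K" and
    KK: "\<And>\<theta> \<theta>'. circ \<theta> \<noteq> circ \<theta>' \<Longrightarrow> K (circ \<theta>) (circ \<theta>') = K_half \<theta> \<theta>'" by blast
  let ?S = "sphere (0::real\<times>real) 1"
  have sym: "\<And>x y. x \<in> ?S \<Longrightarrow> y \<in> ?S \<Longrightarrow> K x y = K y x"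
    using pt unfolding positive_type_on_def by blast
  have psd: "\<And>(n::nat) (m::nat \<Rightarrow> real\<times>real) (\<alpha>::nat\<Rightarrow>real). (\<forall>i<n. m i \<in> ?S) \<Longrightarrow> 0 \<le> (\<Sum>i<n. \<Sum>j<n. \<alpha> i * \<alpha> j * K (m i) (m j))"
    using pt unfolding positive_type_on_def by blast
  have two: "2 * K x y \<le> K x x + K y y" if "x \<in> ?S" "y \<in> ?S" for x y
  proof -
    have "0 \<le> (\<Sum>i<(2::nat). \<Sum>j<(2::nat). (\<lambda>i::nat. if i = 0 then 1 else -1::real) i * (\<lambda>i::nat. if i = 0 then 1 else -1::real) j
              * K ((\<lambda>i::nat. if i = 0 then x else y) i) ((\<lambda>i::nat. if i = 0 then x else y) j))"
      by (rule psd) (use that in auto)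
    also have "\<dots> = K x x + K y y - K x y - K y x"
      by (simp add: numeral_2_eq_2)
    finally show ?thesis using sym[OF that] by simp
  qed
  have Koff: "K x y = 1 - (1 / (2 * pi)) * ln ((dist x y)\<^sup>2)"
    if xy: "x \<in> ?S" "y \<in> ?S" "x \<noteq> y" for x y
  proof -
    obtain t where t: "x = circ t" using circ_onto xy(1) by blast
    obtain s where s: "y = circ s" using circ_onto xy(2) by blast
    show ?thesis using KK[of t s] xy t s by (simp add: K_half_def dist_circ)
  qed
  have "\<exists>N::nat. infinite {m\<in>?S. K m m \<le> real N}"
  proof (rule ccontr)
    assume "\<not> ?thesis"
    hence fin: "\<And>N::nat. finite {m\<in>?S. K m m \<le> real N}" by blast
    have h1: "?S = (\<Union>N::nat. {m\<in>?S. K m m \<le> real N})"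
    proof safe
      fix m assume "m \<in> ?S"
      obtain N::nat where "K m m \<le> real N" using real_nat_ceiling_ge by blast
      thus "m \<in> (\<Union>N::nat. {m\<in>?S. K m m \<le> real N})" using \<open>m \<in> ?S\<close> by blast
    qed
    have h2: "countable (\<Union>N::nat. {m\<in>?S. K m m \<le> real N})"
    proof (rule countable_UN)
      fix N :: nat
      show "countable {m\<in>?S. K m m \<le> real N}" using fin[of N] by (rule countable_finite)
    qed simp
    have "countable ?S" using h2 unfolding h1[symmetric] .
    thus False using sphere_unc by blast
  qed
  then obtain N::nat where inf: "infinite {m\<in>?S. K m m \<le> real N}" by blast
  define A where "A = {m\<in>?S. K m m \<le> real N}"
  have "\<exists>x\<in>?S. x islimpt A"
    by (rule Heine_Borel_imp_Bolzano_Weierstrass) (use inf in \<open>auto simp: A_def\<close>)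
  then obtain x where lim: "x islimpt A" by blast
  define e where "e = exp (- pi * (real N + 1)) / 2"
  have e: "e > 0" by (simp add: e_def)
  obtain y1 where y1: "y1 \<in> A" "y1 \<noteq> x" "dist y1 x < e"
    using lim e unfolding islimpt_approachable by blast
  have "dist y1 x > 0" using y1 by simp
  then obtain y2 where y2: "y2 \<in> A" "y2 \<noteq> x" "dist y2 x < dist y1 x"
    using lim unfolding islimpt_approachable by blast
  have ne: "y1 \<noteq> y2" using y2 by auto
  have d: "dist y1 y2 < 2 * e" using y1 y2 dist_triangle[of y1 y2 x] by (simp add: dist_commute)
  have dpos: "dist y1 y2 > 0" using ne by simp
  have "(dist y1 y2)\<^sup>2 < (2*e)\<^sup>2" using d dpos by (intro power_strict_mono) auto
  also have "(2*e)\<^sup>2 = exp (- 2 * pi * (real N + 1))"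
    by (simp add: e_def power2_eq_square exp_add[symmetric])
  finally have lt: "(dist y1 y2)\<^sup>2 < exp (- 2 * pi * (real N + 1))" .
  have "ln ((dist y1 y2)\<^sup>2) < ln (exp (- 2 * pi * (real N + 1)))"
    using lt dpos by (subst ln_less_cancel_iff) auto
  hence "ln ((dist y1 y2)\<^sup>2) < - 2 * pi * (real N + 1)" by simp
  hence "(1 / (2 * pi)) * ln ((dist y1 y2)\<^sup>2) < - (real N + 1)"
    using pi_gt_zero by (simp add: field_simps)
  hence big: "K y1 y2 > real N + 1"
    using Koff[of y1 y2] y1 y2 ne by (simp add: A_def)
  have "2 * K y1 y2 \<le> K y1 y1 + K y2 y2" using two y1 y2 by (simp add: A_def)
  moreover have "K y1 y1 \<le> real N" "K y2 y2 \<le> real N" using y1 y2 by (auto simp: A_def)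
  ultimately show False using big by linarith
qed

end
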